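(* Let $f \in \mathbb{F}_q[x]$ be a squarefree polynomial of degree $n$. Let $\tilde{f}$ be the product of the irreducible factors of $f$ of degree higher than $n^{2 / 3}$. Then the order of the Frobenius automorphism $\sigma$ of $\mathbb{F}_q[x] / \tilde{f}$ (the $\mathbb{F}_q$-algebra automorphism determined by $x\mapsto x^q$) is less than $\exp\!\left(\frac{2}{3}\sqrt[3]{n} \ln n\right)$.
   Formalization: The bound on the order of the Frobenius automorphism is asserted only for degree n >= 4. The statement above fails without it. *)

theory Defs
  imports Complex_Main "HOL-Computational_Algebra.Computational_Algebra"
begin

definition high_part :: "'a::{field_gcd} poly \<Rightarrow> 'a poly" where
  "high_part f = (\<Prod>p \<in> {p \<in> prime_factors f. real (degree p) > real (degree f) powr (2/3)}. p)"

text \<open>Frobenius map on F_q[x]/h, residues represented by polynomials g with g mod h = g;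
  it is the F_q-algebra map determined by x to x^q, i.e. g(x) to g(x^q) mod h.\<close>
definition frobenius :: "'a::{field_gcd,finite} poly \<Rightarrow> 'a poly \<Rightarrow> 'a poly" where
  "frobenius h g = (g \<circ>\<^sub>p monom 1 (card (UNIV :: 'a set))) mod h"

definition frobenius_order :: "'a::{field_gcd,finite} poly \<Rightarrow> nat" where
  "frobenius_order h = (LEAST k. k > 0 \<and> (\<forall>g. g mod h = g \<longrightarrow> (frobenius h ^^ k) g = g))"

end

theory Submission
  imports Defs "HOL-Analysis.Complex_Transcendental"
begin


definition Rs :: "nat \<Rightarrow> 'a::zero poly set" where
  "Rs d = {r. \<forall>i\<ge>d. coeff r i = 0}"

lemma Rs_0: "Rs 0 = {0}"
  by (auto simp: Rs_def poly_eq_iff)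

lemma Rs_Suc: "(Rs (Suc d) :: 'a::zero poly set) = (\<lambda>(a,r). pCons a r) ` (UNIV \<times> Rs d)"
proof safe
  fix x :: "'a poly" assume x: "x \<in> Rs (Suc d)"
  obtain a r where xe: "x = pCons a r" by (cases x) auto
  have "r \<in> Rs d" using x unfolding xe Rs_def
  proof (safe)
    fix i assume "\<forall>i\<ge>Suc d. coeff (pCons a r) i = 0" "d \<le> i"
    then have "coeff (pCons a r) (Suc i) = 0" by (meson Suc_le_mono)
    then show "coeff r i = 0" by simp
  qed
  then show "x \<in> (\<lambda>(a,r). pCons a r) ` (UNIV \<times> Rs d)" using xe by auto
next
  fix a :: 'a and r :: "'a poly" assume "r \<in> Rs d"
  then show "pCons a r \<in> Rs (Suc d)" by (auto simp: Rs_def coeff_pCons split: nat.splits)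
qed

lemma card_Rs: "finite (Rs d :: 'a::{zero,finite} poly set) \<and> card (Rs d :: 'a poly set) = card (UNIV::'a set) ^ d"
proof (induction d)
  case 0 then show ?case by (simp add: Rs_0)
next
  case (Suc d)
  have inj: "inj_on (\<lambda>(a,r). pCons a (r::'a poly)) (UNIV \<times> Rs d)"
    by (auto simp: inj_on_def)
  show ?case unfolding Rs_Suc using Suc inj
    by (simp add: card_image card_cartesian_product)
qed

lemma Rs_degree: "d \<ge> 1 \<Longrightarrow> Rs d = {r. degree r < d}"
proof safe
  fix r :: "'a poly" assume d: "d \<ge> 1" and r: "r \<in> Rs d"
  show "degree r < d"
  proof (cases "r = 0")
    case True then show ?thesis using d by simp
  next
    case False
    then have "coeff r (degree r) \<noteq> 0" by simp
    moreover have "degree r \<ge> d \<Longrightarrow> coeff r (degree r) = 0" using r unfolding Rs_def by blast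
    ultimately show ?thesis by linarith
  qed
next
  fix r :: "'a poly" assume "degree r < d"
  then show "r \<in> Rs d" unfolding Rs_def by (simp add: coeff_eq_0)
qed



lemma euler_poly:
  fixes p g :: "'a::{field_gcd,finite} poly"
  assumes p: "prime p" and ndvd: "\<not> p dvd g"
  shows "g ^ (card (UNIV::'a set) ^ degree p - 1) mod p = 1 mod p"
proof -
  define d where "d = degree p"
  have p0: "p \<noteq> 0" using p by auto
  have d1: "d \<ge> 1" using p p0 is_unit_iff_degree[OF p0] unfolding d_def
    using not_prime_unit by force
  define S where "S = Rs d - {0 :: 'a poly}"
  have finS: "finite S" using card_Rs[of d, where 'a='a] unfolding S_def by auto
  have cardS: "card S = card (UNIV::'a set) ^ d - 1"
    using card_Rs[of d, where 'a='a] unfolding S_def by (simp add: Rs_def card_Diff_singleton)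
  have Sdeg: "r \<in> S \<longleftrightarrow> r \<noteq> 0 \<and> degree r < d" for r
    unfolding S_def using Rs_degree[OF d1] by auto
  have ndvdS: "\<not> p dvd r" if "r \<in> S" for r
  proof
    assume "p dvd r"
    moreover have "r \<noteq> 0" "degree r < degree p" using that Sdeg d_def by auto
    ultimately show False using dvd_imp_degree[of p r] p0 by simp
  qed
  define phi where "phi r = g * r mod p" for r
  have phiS: "phi r \<in> S" if "r \<in> S" for r
  proof -
    have "phi r \<noteq> 0"
    proof
      assume "phi r = 0"
      then have "p dvd g * r" unfolding phi_def by (simp add: mod_eq_0_iff_dvd)
      then show False using prime_dvd_mult_iff[OF p] ndvd ndvdS[OF that] by simp
    qed
    then show ?thesis using Sdeg degree_mod_less[OF p0, of "g*r"] d_def phi_def by auto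
  qed
  have inj: "inj_on phi S"
  proof
    fix r s assume r: "r \<in> S" and s: "s \<in> S" and e: "phi r = phi s"
    then have "p dvd g * r - g * s" unfolding phi_def by (simp add: mod_eq_dvd_iff)
    then have "p dvd g * (r - s)" by (simp add: right_diff_distrib)
    then have "p dvd r - s" using prime_dvd_mult_iff[OF p] ndvd by simp
    moreover have "degree (r - s) < degree p" using r s Sdeg d_def degree_diff_less by auto
    ultimately have "r - s = 0" using dvd_imp_degree[of p "r-s"] p0 by (cases "r-s=0") auto
    then show "r = s" by simp
  qed
  have img: "phi ` S = S"
    by (intro endo_inj_surj finS inj) (auto intro: phiS)
  have "prod phi S = prod id S"
    using prod.reindex[OF inj, of id] img by simp
  then have "prod phi S mod p = prod id S mod p" by simp
  moreover have "prod phi S mod p = (\<Prod>r\<in>S. g * r) mod p"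
    unfolding phi_def by (simp add: mod_prod_eq)
  moreover have "(\<Prod>r\<in>S. g * r) = g ^ card S * prod id S"
    by (simp add: prod.distrib)
  ultimately have "(g ^ card S * prod id S) mod p = prod id S mod p" by simp
  then have "p dvd g ^ card S * prod id S - prod id S" by (simp add: mod_eq_dvd_iff)
  then have "p dvd (g ^ card S - 1) * prod id S" by (simp add: left_diff_distrib)
  moreover have "\<not> p dvd prod id S"
    using prime_dvd_prod_iff[OF finS p] ndvdS by auto
  ultimately have "p dvd g ^ card S - 1" using prime_dvd_mult_iff[OF p] by simp
  then show ?thesis unfolding cardS d_def by (simp add: mod_eq_dvd_iff)
qed



lemma card_ge2: "card (UNIV::'a::{field,finite} set) \<ge> 2"
proof -
  have "card {0::'a, 1} \<le> card (UNIV::'a set)" by (rule card_mono) auto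
  then show ?thesis by simp
qed

lemma fermat_poly:
  fixes p g :: "'a::{field_gcd,finite} poly"
  assumes p: "prime p"
  shows "g ^ (card (UNIV::'a set) ^ degree p) mod p = g mod p"
proof (cases "p dvd g")
  case True
  have "card (UNIV::'a set) ^ degree p > 0" using card_ge2[where 'a='a] by simp
  then have "p dvd g ^ (card (UNIV::'a set) ^ degree p)"
    using True dvd_trans dvd_power by blast
  then show ?thesis using True by (simp add: mod_eq_0_iff_dvd)
next
  case False
  define N where "N = card (UNIV::'a set) ^ degree p"
  have N: "N \<ge> 1" unfolding N_def using card_ge2[where 'a='a] by simp
  have "g ^ N = g * g ^ (N - 1)" using N by (metis power_eq_if not_one_le_zero)
  then have "g ^ N mod p = (g * (g ^ (N - 1) mod p)) mod p" by (simp add: mod_mult_right_eq)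
  also have "\<dots> = (g * (1 mod p)) mod p" using euler_poly[OF p False] N_def by simp
  also have "\<dots> = g mod p" by (simp add: mod_mult_right_eq)
  finally show ?thesis unfolding N_def .
qed

lemma fermat_field:
  fixes c :: "'a::{field_gcd,finite}"
  shows "c ^ card (UNIV::'a set) = c"
proof -
  have irr: "irreducible [:0, 1::'a:]" by (rule irreducible_linear_field_poly) simp
  have pr: "prime [:0, 1::'a:]"
    using irr by (simp add: prime_def prime_elem_iff_irreducible normalize_poly_def)
      (metis div_by_1 one_pCons)
  have "[:c:] ^ (card (UNIV::'a set) ^ degree [:0, 1::'a:]) mod [:0,1:] = [:c:] mod [:0,1:]"
    by (rule fermat_poly[OF pr])
  then have "[:c ^ card (UNIV::'a set):] mod [:0,1:] = [:c:] mod [:0,1:]"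
    by (simp add: poly_const_pow)
  then have "[:c ^ card (UNIV::'a set):] = [:c:]"
    by (simp add: mod_poly_less)
  then show ?thesis by simp
qed

lemma binom_zero:
  assumes "0 < k" "k < card (UNIV::'a::{field_gcd,finite} set)"
  shows "(of_nat (card (UNIV::'a set) choose k) :: 'a) = 0"
proof -
  define q where "q = card (UNIV::'a set)"
  have q2: "q \<ge> 2" unfolding q_def by (rule card_ge2)
  define P :: "'a poly" where "P = [:1,1:]^q - monom 1 q - 1"
  have coeffP: "coeff P i = (if i \<le> q then of_nat (q choose i) else 0) - (if i = q then 1 else 0) - (if i = 0 then 1 else 0)" for i
    unfolding P_def using coeff_linear_poly_power[of i q "1::'a" 1]
    by (auto simp: coeff_eq_0 degree_linear_power)
  have "degree P \<le> q - 1"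
    by (rule degree_le) (use q2 in \<open>auto simp: coeffP\<close>)
  then have dP: "degree P < q" using q2 by linarith
  have roots: "{x. poly P x = 0} = UNIV"
  proof (rule set_eqI, simp)
    fix x :: 'a
    have "(1+x)^q = 1+x" "x^q = x" unfolding q_def by (rule fermat_field)+
    then show "poly P x = 0" by (simp add: P_def poly_monom)
  qed
  have "P = 0"
  proof (rule ccontr)
    assume "P \<noteq> 0"
    then have "card {x. poly P x = 0} \<le> degree P" by (rule card_poly_roots_bound)
    then show False using roots dP q_def by simp
  qed
  then have "coeff P k = 0" by simp
  then show ?thesis using assms unfolding coeffP q_def by simp
qed

lemma frob_add:
  fixes a b :: "'a::{field_gcd,finite} poly"
  shows "(a + b) ^ card (UNIV::'a set) = a ^ card (UNIV::'a set) + b ^ card (UNIV::'a set)"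
proof -
  define q where "q = card (UNIV::'a set)"
  have q2: "q \<ge> 2" unfolding q_def by (rule card_ge2)
  define f where "f k = of_nat (q choose k) * a^k * b^(q-k)" for k
  have "(a + b) ^ q = (\<Sum>k\<le>q. f k)" unfolding f_def by (rule binomial_ring)
  also have "\<dots> = (\<Sum>k\<in>{0,q}. f k)"
  proof (rule sum.mono_neutral_right)
    show "\<forall>i\<in>{..q} - {0, q}. f i = 0"
    proof
      fix i assume "i \<in> {..q} - {0, q}"
      then have "0 < i" "i < q" by auto
      then have "(of_nat (q choose i) :: 'a) = 0" using binom_zero q_def by blast
      then show "f i = 0" unfolding f_def by (simp add: of_nat_poly)
    qed
  qed auto
  also have "\<dots> = a ^ q + b ^ q" using q2 by (simp add: f_def)
  finally show ?thesis unfolding q_def .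
qed

lemma frob_compose:
  fixes g :: "'a::{field_gcd,finite} poly"
  shows "g \<circ>\<^sub>p monom 1 (card (UNIV::'a set)) = g ^ card (UNIV::'a set)"
proof (induction g)
  case 0 then show ?case using card_ge2[where 'a='a] by simp
next
  case (pCons a g)
  have e: "pCons a g = [:a:] + [:0,1:] * g" by (simp add: poly_eq_iff coeff_pCons split: nat.splits)
  have "pCons a g \<circ>\<^sub>p monom 1 (card (UNIV::'a set)) = [:a:] + monom 1 (card (UNIV::'a set)) * g ^ card (UNIV::'a set)"
    using pCons by (simp add: pcompose_pCons)
  also have "\<dots> = (pCons a g) ^ card (UNIV::'a set)"
  proof -
    have "([:0,1:] * g) ^ card (UNIV::'a set) = [:0,1:] ^ card (UNIV::'a set) * g ^ card (UNIV::'a set)"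
      by (rule power_mult_distrib)
    moreover have "[:a:] ^ card (UNIV::'a set) = [:a:]" by (simp add: poly_const_pow fermat_field)
    moreover have "monom 1 (card (UNIV::'a set)) = ([:0,1:] ^ card (UNIV::'a set) :: 'a poly)"
      by (simp add: monom_altdef)
    ultimately show ?thesis unfolding e frob_add by simp
  qed
  finally show ?case .
qed

lemma frobenius_eq:
  fixes h g :: "'a::{field_gcd,finite} poly"
  shows "frobenius h g = g ^ card (UNIV::'a set) mod h"
  unfolding frobenius_def by (simp add: frob_compose)



lemma frob_iter:
  fixes h g :: "'a::{field_gcd,finite} poly"
  assumes "g mod h = g"
  shows "(frobenius h ^^ j) g = g ^ (card (UNIV::'a set) ^ j) mod h"
proof (induction j)
  case 0 then show ?case using assms by simp
next
  case (Suc j)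
  have "(frobenius h ^^ Suc j) g = frobenius h (g ^ (card (UNIV::'a set) ^ j) mod h)"
    using Suc by simp
  also have "\<dots> = (g ^ (card (UNIV::'a set) ^ j) mod h) ^ card (UNIV::'a set) mod h"
    by (rule frobenius_eq)
  also have "\<dots> = (g ^ (card (UNIV::'a set) ^ j)) ^ card (UNIV::'a set) mod h"
    by (simp add: power_mod)
  also have "\<dots> = g ^ (card (UNIV::'a set) ^ Suc j) mod h"
    by (simp add: power_mult[symmetric] mult.commute)
  finally show ?case .
qed

lemma fermat_iter:
  fixes p g :: "'a::{field_gcd,finite} poly"
  assumes p: "prime p"
  shows "g ^ (card (UNIV::'a set) ^ (degree p * m)) mod p = g mod p"
proof (induction m)
  case 0 then show ?case by simp
next
  case (Suc m)
  define A where "A = card (UNIV::'a set) ^ (degree p * m)"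
  have "g ^ (card (UNIV::'a set) ^ (degree p * Suc m)) = (g ^ A) ^ (card (UNIV::'a set) ^ degree p)"
    unfolding A_def by (simp add: power_mult[symmetric] power_add mult.commute)
  then have "g ^ (card (UNIV::'a set) ^ (degree p * Suc m)) mod p = g ^ A mod p"
    using fermat_poly[OF p, of "g ^ A"] by simp
  then show ?case using Suc A_def by simp
qed

lemma prod_primes_dvd:
  fixes x :: "'a::{field_gcd} poly"
  assumes "finite P" "\<And>p. p \<in> P \<Longrightarrow> prime p" "\<And>p. p \<in> P \<Longrightarrow> p dvd x"
  shows "prod (\<lambda>p. p) P dvd x"
  using assms
proof (induction P rule: finite_induct)
  case empty then show ?case by simp
next
  case (insert p P)
  have cop: "coprime p (prod (\<lambda>p. p) P)"
    by (rule prod_coprime_right) (use insert in \<open>auto intro!: primes_coprime\<close>)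
  have "p * prod (\<lambda>p. p) P dvd x"
    by (rule divides_mult) (use insert cop in auto)
  then show ?case using insert by simp
qed

lemma order_le:
  fixes f :: "'a::{field_gcd,finite} poly"
  assumes f0: "f \<noteq> 0"
  defines "P \<equiv> {p \<in> prime_factors f. real (degree p) > real (degree f) powr (2/3)}"
  shows "frobenius_order (high_part f) \<le> (\<Prod>p\<in>P. degree p)"
proof -
  define h where "h = high_part f"
  have hP: "h = prod (\<lambda>p. p) P" unfolding h_def high_part_def P_def by simp
  have finP: "finite P" unfolding P_def by simp
  have primeP: "prime p" if "p \<in> P" for p using that unfolding P_def by auto
  have degP: "degree p > 0" if "p \<in> P" for p
  proof -
    have "p \<noteq> 0" "\<not> is_unit p" using primeP[OF that] by auto
    then show ?thesis using is_unit_iff_degree by blast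
  qed
  define K where "K = (\<Prod>p\<in>P. degree p)"
  have K0: "K > 0" unfolding K_def using degP finP by (simp add: prod_pos)
  have fix_all: "(frobenius h ^^ K) g = g" if g: "g mod h = g" for g
  proof -
    have "p dvd g ^ (card (UNIV::'a set) ^ K) - g" if p: "p \<in> P" for p
    proof -
      obtain m where m: "K = degree p * m"
        using dvd_prodI[OF finP p, of degree] K_def by (auto elim!: dvdE)
      have "g ^ (card (UNIV::'a set) ^ K) mod p = g mod p"
        unfolding m by (rule fermat_iter[OF primeP[OF p]])
      then show ?thesis by (simp add: mod_eq_dvd_iff)
    qed
    then have "h dvd g ^ (card (UNIV::'a set) ^ K) - g"
      unfolding hP by (intro prod_primes_dvd finP primeP) auto
    then have "g ^ (card (UNIV::'a set) ^ K) mod h = g mod h" by (simp add: mod_eq_dvd_iff)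
    then show ?thesis using frob_iter[OF g, of K] g by simp
  qed
  have "frobenius_order h \<le> K"
    unfolding frobenius_order_def
    by (rule Least_le) (use K0 fix_all in auto)
  then show ?thesis unfolding h_def K_def .
qed



lemma real_bound:
  fixes d :: "'b \<Rightarrow> nat" and P :: "'b set" and n :: nat
  assumes finP: "finite P" and n4: "n \<ge> 4"
    and big: "\<And>p. p \<in> P \<Longrightarrow> real (d p) > real n powr (2/3)"
    and sumle: "(\<Sum>p\<in>P. d p) \<le> n"
  shows "real (\<Prod>p\<in>P. d p) < exp (2/3 * root 3 (real n) * ln (real n))"
proof -
  define N where "N = real n"
  have N4: "N \<ge> 4" using n4 unfolding N_def by simp
  define t where "t = root 3 N"
  define a where "a = N powr (2/3)"
  define m where "m = card P"
  have t13: "t = N powr (1/3)" unfolding t_def using N4 by (simp add: root_powr_inverse)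
  have tpos: "t > 0" unfolding t_def using N4 by simp
  have apos: "a > 0" unfolding a_def using N4 by simp
  have at: "a * t = N" unfolding a_def t13 using N4 by (simp add: powr_add[symmetric])
  have lna: "ln a = 2/3 * ln N" unfolding a_def by simp
  have T: "exp (2/3 * root 3 (real n) * ln (real n)) = exp (t * ln a)"
    unfolding lna t_def N_def by (simp add: algebra_simps)
  have sumR: "(\<Sum>p\<in>P. real (d p)) \<le> N" using sumle unfolding N_def
    by (metis of_nat_le_iff of_nat_sum)
  have mt: "real m < t"
  proof (cases "P = {}")
    case True then show ?thesis using tpos m_def by simp
  next
    case False
    have "(\<Sum>p\<in>P. a) < (\<Sum>p\<in>P. real (d p))"
      by (rule sum_strict_mono[OF finP False]) (use big a_def N_def in auto)
    then have "real m * a < N" using sumR m_def by simp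
    then have "real m * a < t * a" using at by (simp add: mult.commute)
    then show ?thesis using apos by simp
  qed
  have each: "real (d p) \<le> a * exp (real (d p) / a - 1)" for p
  proof -
    have "1 + (real (d p) / a - 1) \<le> exp (real (d p) / a - 1)" by (rule exp_ge_add_one_self)
    then have "real (d p) / a \<le> exp (real (d p) / a - 1)" by simp
    then show ?thesis using apos by (simp add: divide_le_eq mult.commute)
  qed
  have "real (\<Prod>p\<in>P. d p) = (\<Prod>p\<in>P. real (d p))" by simp
  also have "\<dots> \<le> (\<Prod>p\<in>P. a * exp (real (d p) / a - 1))"
    by (rule prod_mono) (use each in auto)
  also have "\<dots> = a ^ m * exp (\<Sum>p\<in>P. (real (d p) / a - 1))"
    using finP by (simp add: prod.distrib exp_sum m_def)
  also have "(\<Sum>p\<in>P. (real (d p) / a - 1)) = (\<Sum>p\<in>P. real (d p)) / a - real m"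
    by (simp add: sum_subtractf sum_divide_distrib m_def)
  also have "\<dots> \<le> t - real m"
  proof -
    have "(\<Sum>p\<in>P. real (d p)) / a \<le> N / a" using sumR apos by (simp add: divide_right_mono)
    also have "N / a = t" using at apos by (auto simp: field_simps)
    finally show ?thesis by simp
  qed
  then have "a ^ m * exp ((\<Sum>p\<in>P. real (d p)) / a - real m) \<le> a ^ m * exp (t - real m)"
    using apos by simp
  also have "a ^ m = exp (real m * ln a)" using apos by (simp add: exp_of_nat_mult)
  finally have bound: "real (\<Prod>p\<in>P. d p) \<le> exp (real m * ln a) * exp (t - real m)" .
  show ?thesis
  proof (cases "n = 4")
    case False
    then have N5: "N \<ge> 5" using n4 N_def by simp
    have "exp 1 < (272/100::real)" by (rule e_less_272)
    then have "exp 1 ^ 3 < (272/100::real) ^ 3" by (intro power_strict_mono) auto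
    then have "exp (3::real) < (272/100::real) ^ 3" by (simp add: exp_of_nat_mult[of 3 1, symmetric])
    moreover have "(272/100::real) ^ 3 < 25" by (simp add: power3_eq_cube)
    ultimately have "exp (3::real) < 25" by linarith
    also have "25 \<le> N * N"
    proof -
      have "5 * 5 \<le> N * N" by (rule mult_mono) (use N5 in auto)
      then show ?thesis by simp
    qed
    finally have "exp 3 < N * N" .
    then have "ln (exp 3) < ln (N * N)" using N5 by (subst ln_less_cancel_iff) auto
    then have "3 < ln (N * N)" by simp
    then have "3 < 2 * ln N" using N5 by (simp add: ln_mult)
    then have lna1: "ln a > 1" unfolding lna by simp
    have "exp (real m * ln a) * exp (t - real m) = exp (real m * ln a + (t - real m))"
      by (simp add: exp_add)
    also have "\<dots> < exp (t * ln a)"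
    proof -
      have "(t - real m) * 1 < (t - real m) * ln a" using mt lna1 by simp
      then show ?thesis by (simp add: algebra_simps)
    qed
    finally show ?thesis using bound T by simp
  next
    case True
    then have N: "N = 4" using N_def by simp
    have "root 3 (27/8) < root 3 (4::real)" by simp
    moreover have "root 3 (27/8::real) = 3/2"
      using real_root_pos_unique[of 3 "3/2" "27/8"] by (simp add: power_divide)
    ultimately have t32: "t > 3/2" unfolding t_def N by simp
    have "root 3 (4::real) < root 3 8" by (rule real_root_less_mono) auto
    moreover have "root 3 (8::real) = 2"
      using real_root_pos_unique[of 3 2 8] by simp
    ultimately have "root 3 (4::real) < 2" by linarith
    then have t2: "t < 2" unfolding t_def N .
    have m1: "m \<le> 1" using mt t2 by linarith
    have prod_le: "real (\<Prod>p\<in>P. d p) \<le> 4"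
    proof (cases "m = 0")
      case True
      then have "P = {}" using finP m_def by simp
      then show ?thesis by simp
    next
      case False
      then have "m = 1" using m1 by simp
      then have "card P = 1" using m_def by simp
      then obtain p where "P = {p}" by (rule card_1_singletonE)
      then show ?thesis using sumle True by simp
    qed
    have "exp (2/3 * root 3 (real n) * ln (real n)) = exp (2/3 * t * ln 4)"
      using N N_def t_def by simp
    also have "\<dots> > exp (ln 4)"
    proof -
      have "ln (4::real) > 0" by simp
      then have "1 * ln (4::real) < (2/3 * t) * ln 4" using t32 by (intro mult_strict_right_mono) auto
      then have "ln (4::real) < 2/3 * t * ln 4" by simp
      then show ?thesis by (subst exp_less_cancel_iff)
    qed
    finally have "exp (2/3 * root 3 (real n) * ln (real n)) > 4" by simp
    then show ?thesis using prod_le by simp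
  qed
qed


theorem lemma1:
  fixes f :: "'a::{field_gcd,finite} poly" and n :: nat
  assumes "squarefree f" and "degree f = n" and "n \<ge> 4"
  shows "real (frobenius_order (high_part f)) < exp (2/3 * root 3 (real n) * ln (real n))"
proof -
  have f0: "f \<noteq> 0" using assms by auto
  define P where "P = {p \<in> prime_factors f. real (degree p) > real (degree f) powr (2/3)}"
  have finP: "finite P" unfolding P_def by simp
  have primeP: "prime p" if "p \<in> P" for p using that unfolding P_def by auto
  have dvdP: "p dvd f" if "p \<in> P" for p using that unfolding P_def by (auto intro: in_prime_factors_imp_dvd)
  have "prod (\<lambda>p. p) P dvd f" by (rule prod_primes_dvd[OF finP primeP dvdP])
  moreover have "prod (\<lambda>p. p) P \<noteq> 0"
  proof -
    have "0 \<notin> P" using primeP not_prime_0 by blast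
    then show ?thesis using finP by (simp add: prod_zero_iff)
  qed
  ultimately have "degree (prod (\<lambda>p. p) P) \<le> degree f" using f0 dvd_imp_degree by blast
  moreover have "degree (prod (\<lambda>p. p) P) = (\<Sum>p\<in>P. degree p)"
    by (rule degree_prod_sum_eq) (use primeP not_prime_0 in blast)
  ultimately have sumle: "(\<Sum>p\<in>P. degree p) \<le> n" using assms by simp
  have big: "real (degree p) > real n powr (2/3)" if "p \<in> P" for p
    using that assms unfolding P_def by auto
  have "frobenius_order (high_part f) \<le> (\<Prod>p\<in>P. degree p)"
    unfolding P_def by (rule order_le[OF f0])
  then have "real (frobenius_order (high_part f)) \<le> real (\<Prod>p\<in>P. degree p)" by (simp only: of_nat_le_iff)
  also have "\<dots> < exp (2/3 * root 3 (real n) * ln (real n))"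
    by (rule real_bound[OF finP assms(3) big sumle])
  finally show ?thesis .
qed

end
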